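(* Let $\mathbf H\in\mathbb R^{N\times L}$ and $\mathbf G=[\mathbf g_1,\dots,\mathbf g_M]\in\mathbb R^{N\times M}$ with $\operatorname{rank}([\mathbf H\ \mathbf G])=L+M$. Perform the recursive differencing procedure described in the context, with arbitrary admissible choices of reference indices $j_1,\dots,j_M$ (assuming that at every step $k$ the vector $\mathbf g_k^{(k-1)}$ has at least two nonzero entries), and let $\boldsymbol\Gamma=\boldsymbol\Gamma^{(M)}\cdots\boldsymbol\Gamma^{(1)}$. Then $\boldsymbol\Gamma\in\mathbb R^{(N-M)\times N}$ has full row rank, $\boldsymbol\Gamma\mathbf G=\mathbf 0$, and with $\mathbf P=(\boldsymbol\Gamma\boldsymbol\Gamma^T)^{-1/2}\boldsymbol\Gamma$ the differential estimate $$\hat{\mathbf x}_d=(\mathbf H^T\mathbf P^T\mathbf P\mathbf H)^{-1}\mathbf H^T\mathbf P^T\mathbf P\mathbf y$$ is well defined and equals $\hat{\mathbf x}_{\mathrm{jls}}=(\mathbf H^T\mathbf P_{\mathbf G}^\perp\mathbf H)^{-1}\mathbf H^T\mathbf P_{\mathbf G}^\perp\mathbf y$ for every $\mathbf y\in\mathbb R^N$. In particular $\hat{\mathbf x}_d$ does not depend on the choice of the reference indices $j_1,\dots,j_M$.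
   Context: Recursive differencing procedure: set $\mathbf g_i^{(0)}=\mathbf g_i$ for $i=1,\dots,M$. For $k=1,\dots,M$, let $\mathbf v=\mathbf g_k^{(k-1)}\in\mathbb R^{N-k+1}$, let $Z=\{i:v_i=0\}$ and $S=\{i:v_i\neq0\}$, and choose a reference index $j=j_k\in S$. Define $\boldsymbol\Gamma^{(k)}\in\mathbb R^{(N-k)\times(N-k+1)}$ as the matrix whose rows (listed in increasing order of $i$) are $\mathbf e_i^T$ for $i\in Z$ and $\mathbf e_i^T/v_i-\mathbf e_j^T/v_j$ for $i\in S\setminus\{j\}$, where $\mathbf e_i$ are standard basis vectors of $\mathbb R^{N-k+1}$; that is, the $k$-th step maps a vector $\mathbf d$ to the vector keeping the entries $d_i$, $i\in Z$, and replacing the others by $d_i/v_i-d_j/v_j$, $i\in S\setminus\{j\}$. Then set $\mathbf g_i^{(k)}=\boldsymbol\Gamma^{(k)}\mathbf g_i^{(k-1)}$ for all $i$. $\mathbf P_{\mathbf G}^\perp=\mathbf I_N-\mathbf G(\mathbf G^T\mathbf G)^{-1}\mathbf G^T$; $(\cdot)^{-1/2}$ is the inverse symmetric positive definite square root. *)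

theory Defs
  imports "Jordan_Normal_Form.Matrix" "Jordan_Normal_Form.DL_Rank"
begin

text \<open>Matrices are Jordan_Normal_Form matrices over the reals; all indices are 0-based.\<close>

definition mat_inv :: "real mat \<Rightarrow> real mat" where
  "mat_inv A = (THE B. B \<in> carrier_mat (dim_row A) (dim_row A) \<and> A * B = 1\<^sub>m (dim_row A)
                      \<and> B * A = 1\<^sub>m (dim_row A))"

definition spd_mat :: "nat \<Rightarrow> real mat \<Rightarrow> bool" where
  "spd_mat n S \<longleftrightarrow> S \<in> carrier_mat n n \<and> transpose_mat S = S \<and>
      (\<forall>x \<in> carrier_vec n. x \<noteq> 0\<^sub>v n \<longrightarrow> x \<bullet> (S *\<^sub>v x) > 0)"

text \<open>S is the inverse of the symmetric positive definite square root of A,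
  i.e. S is symmetric positive definite and (S*S)*A = I.\<close>
definition is_inv_sqrt :: "real mat \<Rightarrow> real mat \<Rightarrow> bool" where
  "is_inv_sqrt S A \<longleftrightarrow> spd_mat (dim_row A) S \<and> S * S * A = 1\<^sub>m (dim_row A)"

definition mat_inv_sqrt :: "real mat \<Rightarrow> real mat" where
  "mat_inv_sqrt A = (THE S. is_inv_sqrt S A)"

text \<open>One differencing step for the vector v (length n) and reference index j:
  the (n-1) x n matrix whose rows, in increasing order of i \<noteq> j, are e_i^T if v_i = 0,
  and e_i^T / v_i - e_j^T / v_j otherwise.\<close>
definition diff_step :: "real vec \<Rightarrow> nat \<Rightarrow> real mat" where
  "diff_step v j = mat (dim_vec v - 1) (dim_vec v) (\<lambda>(r, c).
      let i = (if r < j then r else Suc r) in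
      if v $ i = 0 then (if c = i then 1 else 0)
      else (if c = i then 1 / v $ i else 0) - (if c = j then 1 / v $ j else 0))"

text \<open>diff_G js G k = the matrix [g_1^(k), ..., g_M^(k)]; column k (0-based) of it is g_(k+1)^(k).
  js (k+1) is the reference index j_(k+1) used at step k+1.\<close>
fun diff_G :: "(nat \<Rightarrow> nat) \<Rightarrow> real mat \<Rightarrow> nat \<Rightarrow> real mat" where
  "diff_G js G 0 = G"
| "diff_G js G (Suc k) = diff_step (col (diff_G js G k) k) (js (Suc k)) * diff_G js G k"

fun diff_Gamma :: "(nat \<Rightarrow> nat) \<Rightarrow> real mat \<Rightarrow> nat \<Rightarrow> real mat" where
  "diff_Gamma js G 0 = 1\<^sub>m (dim_row G)"
| "diff_Gamma js G (Suc k) = diff_step (col (diff_G js G k) k) (js (Suc k)) * diff_Gamma js G k"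

definition admissible_refs :: "(nat \<Rightarrow> nat) \<Rightarrow> real mat \<Rightarrow> bool" where
  "admissible_refs js G \<longleftrightarrow> (\<forall>k < dim_col G.
      let v = col (diff_G js G k) k in
        2 \<le> card {i. i < dim_vec v \<and> v $ i \<noteq> 0} \<and> js (Suc k) < dim_vec v \<and> v $ js (Suc k) \<noteq> 0)"

definition proj_perp :: "real mat \<Rightarrow> real mat" where
  "proj_perp G = 1\<^sub>m (dim_row G) - G * mat_inv (transpose_mat G * G) * transpose_mat G"

end

theory Submission
  imports Defs "Jordan_Normal_Form.Char_Poly" "Jordan_Normal_Form.Schur_Decomposition" "Jordan_Normal_Form.Determinant"
begin

lemma sym_real_eigen:
  fixes A :: "real mat"
  assumes A: "A \<in> carrier_mat n n" and sym: "transpose_mat A = A" and n: "n > 0"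
  shows "\<exists>lam v. v \<in> carrier_vec n \<and> v \<noteq> 0\<^sub>v n \<and> A *\<^sub>v v = lam \<cdot>\<^sub>v v"
proof -
  let ?Ac = "map_mat complex_of_real A"
  have Ac: "?Ac \<in> carrier_mat n n" using A by simp
  from char_poly_factorized[OF Ac] obtain as where cp: "char_poly ?Ac = (\<Prod>a\<leftarrow>as. [:- a, 1:])" and len: "length as = n" by blast
  from len n obtain e es where as: "as = e # es" by (cases as) auto
  have "poly (char_poly ?Ac) e = 0" unfolding cp as by simp
  hence "eigenvalue ?Ac e" using eigenvalue_root_char_poly[OF Ac] by simp
  then obtain v where ev: "eigenvector ?Ac v e" unfolding eigenvalue_def by blast
  hence v: "v \<in> carrier_vec n" "v \<noteq> 0\<^sub>v n" and Av: "?Ac *\<^sub>v v = e \<cdot>\<^sub>v v" using Ac unfolding eigenvector_def by auto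
  define s where "s = (\<Sum>i\<in>{0..<n}. cnj (v$i) * (\<Sum>j\<in>{0..<n}. complex_of_real (A$$(i,j)) * v$j))"
  define r where "r = (\<Sum>i\<in>{0..<n}. cmod (v$i)^2)"
  have rowi: "(\<Sum>j\<in>{0..<n}. complex_of_real (A$$(i,j)) * v$j) = e * v$i" if i: "i < n" for i
  proof -
    have "(?Ac *\<^sub>v v) $ i = e * v $ i" using Av i v by simp
    moreover have "(?Ac *\<^sub>v v) $ i = (\<Sum>j\<in>{0..<n}. complex_of_real (A$$(i,j)) * v$j)"
      using i A v by (simp add: scalar_prod_def)
    ultimately show ?thesis by simp
  qed
  have s1: "s = e * complex_of_real r"
  proof -
    have "s = (\<Sum>i\<in>{0..<n}. e * (cnj (v$i) * v$i))" unfolding s_def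
      by (rule sum.cong, simp, simp add: rowi mult.assoc mult.left_commute)
    also have "\<dots> = e * (\<Sum>i\<in>{0..<n}. cnj (v$i) * v$i)" by (simp add: sum_distrib_left)
    also have "(\<Sum>i\<in>{0..<n}. cnj (v$i) * v$i) = complex_of_real r" unfolding r_def
      by (simp add: of_real_sum, rule sum.cong, simp, simp only: of_real_power[symmetric] complex_norm_square mult.commute)
    finally show ?thesis .
  qed
  have s2: "cnj s = s"
  proof -
    have "cnj s = (\<Sum>i\<in>{0..<n}. \<Sum>j\<in>{0..<n}. v$i * complex_of_real (A$$(i,j)) * cnj (v$j))"
      unfolding s_def by (simp add: sum_distrib_left mult.assoc)
    also have "\<dots> = (\<Sum>j\<in>{0..<n}. \<Sum>i\<in>{0..<n}. v$i * complex_of_real (A$$(i,j)) * cnj (v$j))"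
      by (rule sum.swap)
    also have "\<dots> = s" unfolding s_def sum_distrib_left
    proof (rule sum.cong[OF refl], rule sum.cong[OF refl])
      fix j i assume j: "j \<in> {0..<n}" and i: "i \<in> {0..<n}"
      have "A $$ (i,j) = A $$ (j,i)"
        using arg_cong[OF sym, of "\<lambda>M. M $$ (j,i)"] A i j by simp
      thus "v$i * complex_of_real (A$$(i,j)) * cnj (v$j) = cnj (v$j) * (complex_of_real (A$$(j,i)) * v$i)"
        by (simp add: mult.commute mult.left_commute)
    qed
    finally show ?thesis .
  qed
  have rpos: "r > 0"
  proof -
    from v obtain i where i: "i < n" and vi: "v $ i \<noteq> 0"
      by (metis carrier_vecD eq_vecI index_zero_vec(1) index_zero_vec(2))
    have "cmod (v$i)^2 \<le> r" unfolding r_def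
      by (rule member_le_sum, insert i, auto)
    moreover have "cmod (v$i)^2 > 0" using vi by simp
    ultimately show ?thesis by linarith
  qed
  have "cnj e * complex_of_real r = e * complex_of_real r" using s1 s2
    by (metis complex_cnj_complex_of_real complex_cnj_mult)
  hence ce: "cnj e = e" using rpos by simp
  define lam where "lam = Re e"
  have elam: "e = complex_of_real lam" unfolding lam_def using ce
    by (metis Reals_cnj_iff complex_is_Real_iff of_real_Re)
  have "poly (char_poly ?Ac) e = 0" by fact
  hence "complex_of_real (poly (char_poly A) lam) = 0"
    unfolding of_real_hom.char_poly_hom[OF A] elam by simp
  hence "poly (char_poly A) lam = 0" by simp
  hence "eigenvalue A lam" using eigenvalue_root_char_poly[OF A] by simp
  from find_eigenvector[OF A this] show ?thesis unfolding eigenvector_def using A by blast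
qed

lemma real_self_pos: fixes v :: "real vec" assumes "v \<in> carrier_vec n" "v \<noteq> 0\<^sub>v n"
  shows "v \<bullet> v > 0"
  using conjugate_square_greater_0_vec[OF assms(1)] assms(2) by simp

lemma orth_completion:
  fixes v :: "real vec"
  assumes v: "v \<in> carrier_vec n" and vv: "v \<bullet> v = 1"
  shows "\<exists>W. W \<in> carrier_mat n n \<and> transpose_mat W * W = 1\<^sub>m n \<and> col W 0 = v"
proof -
  interpret cof_vec_space n "TYPE(real)" .
  have v0: "v \<noteq> 0\<^sub>v n" using vv v by auto
  define b where "b = basis_completion v"
  from basis_completion[OF v v0, folded b_def]
  have dist_b: "distinct b" 
    and indep: "\<not> lin_dep (set b)" and b: "set b \<subseteq> carrier_vec n" and hdb: "hd b = v" 
    and len_b: "length b = n" by auto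
  have n: "n > 0" using v0 v by (cases n, auto)
  from hdb len_b n obtain vs where bv: "b = v # vs" by (cases b, auto)
  define ws where "ws = gram_schmidt n b"
  from gram_schmidt_result[OF b dist_b indep ws_def]
  have ws: "set ws \<subseteq> carrier_vec n" "corthogonal ws" "length ws = n" 
    by (auto simp: len_b)
  from gram_schmidt_hd[OF v, of vs, folded bv] have hdws: "hd ws = v" unfolding ws_def .
  define us where "us = map (\<lambda>w. (1 / sqrt (w \<bullet> w)) \<cdot>\<^sub>v w) ws"
  have lus: "length us = n" unfolding us_def using ws by simp
  have wsi: "ws ! i \<in> carrier_vec n" if "i < n" for i using ws that by auto
  have orth: "ws ! i \<bullet> ws ! j = 0 \<longleftrightarrow> i \<noteq> j" if "i < n" "j < n" for i j
    using corthogonalD[OF ws(2), of i j] ws that by simp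
  have pos: "ws ! i \<bullet> ws ! i > 0" if "i < n" for i
  proof -
    have "ws ! i \<bullet> ws ! i \<noteq> 0" using orth[OF that that] by simp
    moreover have "ws ! i \<bullet> ws ! i \<ge> 0" using conjugate_square_ge_0_vec[of "ws ! i"] 
      by simp
    ultimately show ?thesis by simp
  qed
  have usi: "us ! i = (1 / sqrt (ws ! i \<bullet> ws ! i)) \<cdot>\<^sub>v ws ! i" if "i < n" for i
    unfolding us_def using that ws by simp
  have us_carr: "set us \<subseteq> carrier_vec n" unfolding us_def using ws by auto
  define W where "W = mat_of_cols n us"
  have W: "W \<in> carrier_mat n n" unfolding W_def using mat_of_cols_carrier(1)[of n us] lus by simp
  have colW: "col W i = us ! i" if "i < n" for i unfolding W_def using that lus us_carr
    by (simp add: col_mat_of_cols nth_mem subsetD)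
  have "transpose_mat W * W = 1\<^sub>m n"
  proof (rule eq_matI)
    fix i j assume "i < dim_row (1\<^sub>m n)" "j < dim_col (1\<^sub>m n)"
    hence i: "i < n" and j: "j < n" by auto
    have "(transpose_mat W * W) $$ (i,j) = us ! i \<bullet> us ! j"
      using W i j colW by simp
    also have "\<dots> = (1 / sqrt (ws ! i \<bullet> ws ! i)) * (1 / sqrt (ws ! j \<bullet> ws ! j)) * (ws ! i \<bullet> ws ! j)"
      unfolding usi[OF i] usi[OF j] using wsi[OF i] wsi[OF j] by simp
    also have "\<dots> = 1\<^sub>m n $$ (i,j)"
    proof (cases "i = j")
      case True
      have p: "ws ! i \<bullet> ws ! i > 0" using pos[OF i] .
      have "(1 / sqrt (ws ! i \<bullet> ws ! i)) * (1 / sqrt (ws ! i \<bullet> ws ! i)) * (ws ! i \<bullet> ws ! i) = 1"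
        using p by (simp add: field_simps)
      then show ?thesis using True i by simp
    next
      case False
      then show ?thesis using orth[OF i j] i j by simp
    qed
    finally show "(transpose_mat W * W) $$ (i,j) = 1\<^sub>m n $$ (i,j)" .
  qed (insert W, auto)
  moreover have "col W 0 = v"
  proof -
    have "ws ! 0 = v" using hdws ws(3) n by (cases ws, auto)
    hence "us ! 0 = v" using usi[OF n] vv by simp
    thus ?thesis using colW[OF n] by simp
  qed
  ultimately show ?thesis using W by blast
qed

lemma spectral:
  fixes A :: "real mat"
  assumes "A \<in> carrier_mat n n" and "transpose_mat A = A"
  shows "\<exists>U D. U \<in> carrier_mat n n \<and> D \<in> carrier_mat n n \<and> transpose_mat U * U = 1\<^sub>m n
     \<and> (\<forall>i<n. \<forall>j<n. i \<noteq> j \<longrightarrow> D $$ (i,j) = 0) \<and> A = U * D * transpose_mat U"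
  using assms
proof (induction n arbitrary: A)
  case 0
  show ?case
    by (rule exI[of _ "1\<^sub>m 0"], rule exI[of _ "1\<^sub>m 0"], insert 0, auto intro!: eq_matI)
next
  case (Suc m A)
  let ?n = "Suc m"
  have A: "A \<in> carrier_mat ?n ?n" and sym: "transpose_mat A = A" by fact+
  from sym_real_eigen[OF A sym] obtain lam v0 where v0: "v0 \<in> carrier_vec ?n" "v0 \<noteq> 0\<^sub>v ?n"
    and Av0: "A *\<^sub>v v0 = lam \<cdot>\<^sub>v v0" by auto
  define v where "v = (1 / sqrt (v0 \<bullet> v0)) \<cdot>\<^sub>v v0"
  have p: "v0 \<bullet> v0 > 0" using real_self_pos[OF v0] .
  have v: "v \<in> carrier_vec ?n" unfolding v_def using v0 by simp
  have vv: "v \<bullet> v = 1" unfolding v_def using v0 p by (simp add: field_simps)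
  have Av: "A *\<^sub>v v = lam \<cdot>\<^sub>v v" unfolding v_def using Av0 v0 A
    by (simp add: mult_mat_vec smult_smult_assoc mult.commute)
  from orth_completion[OF v vv] obtain W where W: "W \<in> carrier_mat ?n ?n"
    and WW: "transpose_mat W * W = 1\<^sub>m ?n" and cW: "col W 0 = v" by blast
  have WT: "transpose_mat W \<in> carrier_mat ?n ?n" using W by simp
  have WW2: "W * transpose_mat W = 1\<^sub>m ?n" using mat_mult_left_right_inverse[OF WT W WW] .
  define A' where "A' = transpose_mat W * A * W"
  have A': "A' \<in> carrier_mat ?n ?n" unfolding A'_def using W A by simp
  have symA': "transpose_mat A' = A'"
  proof -
    have "transpose_mat A' = transpose_mat W * transpose_mat (transpose_mat W * A)"
      unfolding A'_def using W A by (subst transpose_mult[of _ ?n ?n W ?n], auto)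
    also have "\<dots> = transpose_mat W * (transpose_mat A * W)"
      using W A by (subst transpose_mult[of _ ?n ?n A ?n], auto)
    also have "\<dots> = A'" unfolding A'_def sym using W A by (simp add: assoc_mult_mat[of _ ?n ?n _ ?n _ ?n])
    finally show ?thesis .
  qed
  have colA': "col A' 0 = lam \<cdot>\<^sub>v unit_vec ?n 0"
  proof -
    have "col A' 0 = transpose_mat W *\<^sub>v (A *\<^sub>v col W 0)" unfolding A'_def
      using W A col_mult2[of "transpose_mat W" ?n ?n "A*W" ?n 0] col_mult2[of A ?n ?n W ?n 0]
      by (simp add: assoc_mult_mat[of _ ?n ?n _ ?n _ ?n])
    also have "\<dots> = lam \<cdot>\<^sub>v (transpose_mat W *\<^sub>v col W 0)" unfolding cW Av using WT v
      by (simp add: mult_mat_vec)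
    also have "transpose_mat W *\<^sub>v col W 0 = col (transpose_mat W * W) 0" by (rule col_mult2[OF WT W, of 0, symmetric], simp)
    also have "\<dots> = unit_vec ?n 0" unfolding WW by simp
    finally show ?thesis .
  qed
  have A'i0: "A' $$ (i,0) = (if i = 0 then lam else 0)" if "i < ?n" for i
    using arg_cong[OF colA', of "\<lambda>x. x $ i"] that A' by (auto simp: unit_vec_def)
  have A'0j: "A' $$ (0,j) = (if j = 0 then lam else 0)" if "j < ?n" for j
    using arg_cong[OF symA', of "\<lambda>M. M $$ (j,0)"] A'i0[OF that] that A' by auto
  define A3 where "A3 = mat m m (\<lambda>(i,j). A' $$ (Suc i, Suc j))"
  have A3: "A3 \<in> carrier_mat m m" unfolding A3_def by simp
  have symA3: "transpose_mat A3 = A3" unfolding A3_def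
  proof (rule eq_matI, auto)
    fix i j assume "i < m" "j < m"
    thus "A' $$ (Suc j, Suc i) = A' $$ (Suc i, Suc j)"
      using arg_cong[OF symA', of "\<lambda>M. M $$ (Suc i, Suc j)"] A' by auto
  qed
  from Suc.IH[OF A3 symA3] obtain U3 D3 where U3: "U3 \<in> carrier_mat m m" and D3: "D3 \<in> carrier_mat m m"
    and UU3: "transpose_mat U3 * U3 = 1\<^sub>m m" and diagD3: "\<forall>i<m. \<forall>j<m. i \<noteq> j \<longrightarrow> D3 $$ (i,j) = 0"
    and A3eq: "A3 = U3 * D3 * transpose_mat U3" by blast
  define B where "B = four_block_mat (1\<^sub>m 1) (0\<^sub>m 1 m) (0\<^sub>m m 1) U3"
  define D where "D = four_block_mat (mat 1 1 (\<lambda>_. lam)) (0\<^sub>m 1 m) (0\<^sub>m m 1) D3"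
  have B: "B \<in> carrier_mat ?n ?n" unfolding B_def using U3 
    using four_block_carrier_mat[of "1\<^sub>m 1" 1 1 U3 m m] by simp
  have D: "D \<in> carrier_mat ?n ?n" unfolding D_def using D3
    using four_block_carrier_mat[of "mat 1 1 (\<lambda>_. lam)" 1 1 D3 m m] by simp
  have BT: "transpose_mat B = four_block_mat (1\<^sub>m 1) (0\<^sub>m 1 m) (0\<^sub>m m 1) (transpose_mat U3)"
    unfolding B_def using U3 by (subst transpose_four_block_mat, auto)
  have BB: "transpose_mat B * B = 1\<^sub>m ?n"
    unfolding BT unfolding B_def using U3
    by (subst mult_four_block_mat[of _ 1 1 _ m _ m _ _ 1 _ m], auto simp: UU3)
  have BDB: "B * D * transpose_mat B = four_block_mat (mat 1 1 (\<lambda>_. lam)) (0\<^sub>m 1 m) (0\<^sub>m m 1) A3"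
    unfolding BT unfolding B_def D_def A3eq using U3 D3
    apply (subst mult_four_block_mat[of _ 1 1 _ m _ m _ _ 1 _ m], auto)
    apply (subst mult_four_block_mat[of _ 1 1 _ m _ m _ _ 1 _ m], auto)
    done
  have A'eq: "A' = B * D * transpose_mat B" unfolding BDB
  proof (rule eq_matI)
    fix i j assume i: "i < dim_row (four_block_mat (mat 1 1 (\<lambda>_. lam)) (0\<^sub>m 1 m) (0\<^sub>m m 1) A3)"
      and j: "j < dim_col (four_block_mat (mat 1 1 (\<lambda>_. lam)) (0\<^sub>m 1 m) (0\<^sub>m m 1) A3)"
    hence i: "i < ?n" and j: "j < ?n" using A3 by auto
    show "A' $$ (i, j) = four_block_mat (mat 1 1 (\<lambda>_. lam)) (0\<^sub>m 1 m) (0\<^sub>m m 1) A3 $$ (i, j)"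
    proof (cases "i = 0 \<or> j = 0")
      case True
      then show ?thesis using A'i0[OF i] A'0j[OF j] i j A3 by auto
    next
      case False
      then obtain i' j' where "i = Suc i'" "j = Suc j'" by (cases i; cases j, auto)
      then show ?thesis using i j A3 unfolding A3_def by auto
    qed
  qed (insert A' A3, auto)
  define U where "U = W * B"
  have U: "U \<in> carrier_mat ?n ?n" unfolding U_def using W B by simp
  have "transpose_mat U * U = transpose_mat B * (transpose_mat W * W * B)"
    unfolding U_def transpose_mult[OF W B] using W B by (simp add: assoc_mult_mat[of _ ?n ?n _ ?n _ ?n])
  also have "\<dots> = 1\<^sub>m ?n" unfolding WW using B BB by simp
  finally have UTU: "transpose_mat U * U = 1\<^sub>m ?n" .
  have diagD: "\<forall>i<?n. \<forall>j<?n. i \<noteq> j \<longrightarrow> D $$ (i,j) = 0"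
  proof (intro allI impI)
    fix i j assume i: "i < ?n" and j: "j < ?n" and ij: "i \<noteq> j"
    show "D $$ (i,j) = 0"
    proof (cases "i = 0 \<or> j = 0")
      case True
      then show ?thesis using i j ij D3 unfolding D_def by auto
    next
      case False
      then obtain i' j' where "i = Suc i'" "j = Suc j'" by (cases i; cases j, auto)
      then show ?thesis using i j ij D3 diagD3 unfolding D_def by auto
    qed
  qed
  have "A = W * A' * transpose_mat W" unfolding A'_def using W A WT
    by (simp add: assoc_mult_mat[of _ ?n ?n _ ?n _ ?n] WW2 flip: assoc_mult_mat[of W ?n ?n "transpose_mat W" ?n _ ?n])
  also have "\<dots> = U * D * transpose_mat U" unfolding A'eq U_def using W B D
    by (simp add: transpose_mult[OF W B] assoc_mult_mat[of _ ?n ?n _ ?n _ ?n])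
  finally show ?case using U D UTU diagD by blast
qed


lemma sylv_zero:
  fixes T1 T2 X :: "real mat"
  assumes T1: "spd_mat n T1" and T2: "spd_mat n T2" and X: "X \<in> carrier_mat n n"
    and Z: "T1 * X + X * T2 = 0\<^sub>m n n"
  shows "X = 0\<^sub>m n n"
proof -
  have T1c: "T1 \<in> carrier_mat n n" and T2c: "T2 \<in> carrier_mat n n" and sT2: "transpose_mat T2 = T2"
    using T1 T2 unfolding spd_mat_def by auto
  have nn: "x \<bullet> (T *\<^sub>v x) \<ge> 0" if "spd_mat n T" "x \<in> carrier_vec n" for T x
  proof (cases "x = 0\<^sub>v n")
    case True
    have "T \<in> carrier_mat n n" using that unfolding spd_mat_def by auto
    then show ?thesis using True by simp
  next
    case False then show ?thesis using that unfolding spd_mat_def by force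
  qed
  define F1 where "F1 = (\<Sum>k\<in>{0..<n}. col X k \<bullet> (T1 *\<^sub>v col X k))"
  define F2 where "F2 = (\<Sum>i\<in>{0..<n}. row X i \<bullet> (T2 *\<^sub>v row X i))"
  have f1: "col X k \<bullet> (T1 *\<^sub>v col X k) = (\<Sum>i\<in>{0..<n}. X $$ (i,k) * (T1 * X) $$ (i,k))" if "k < n" for k
    using that X T1c by (simp add: scalar_prod_def)
  have f2: "row X i \<bullet> (T2 *\<^sub>v row X i) = (\<Sum>k\<in>{0..<n}. X $$ (i,k) * (X * T2) $$ (i,k))" if "i < n" for i
  proof -
    have "row X i \<bullet> (T2 *\<^sub>v row X i) = (\<Sum>k\<in>{0..<n}. X $$ (i,k) * (row T2 k \<bullet> row X i))"
      using that X T2c by (simp add: scalar_prod_def)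
    also have "\<dots> = (\<Sum>k\<in>{0..<n}. X $$ (i,k) * (X * T2) $$ (i,k))"
    proof (rule sum.cong[OF refl])
      fix k assume k: "k \<in> {0..<n}"
      have "col T2 k = row T2 k" using arg_cong[OF sT2, of "\<lambda>M. col M k"] k T2c by simp
      hence "(X * T2) $$ (i,k) = row X i \<bullet> row T2 k" using that k X T2c by simp
      also have "\<dots> = row T2 k \<bullet> row X i" using k that X T2c by (simp add: comm_scalar_prod[of _ n])
      finally show "X $$ (i,k) * (row T2 k \<bullet> row X i) = X $$ (i,k) * (X * T2) $$ (i,k)" by simp
    qed
    finally show ?thesis .
  qed
  have e1: "F1 = (\<Sum>k\<in>{0..<n}. \<Sum>i\<in>{0..<n}. X $$ (i,k) * (T1 * X) $$ (i,k))"
    unfolding F1_def by (rule sum.cong[OF refl], rule f1, simp)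
  have e2: "F2 = (\<Sum>k\<in>{0..<n}. \<Sum>i\<in>{0..<n}. X $$ (i,k) * (X * T2) $$ (i,k))"
    unfolding F2_def by (subst sum.swap, rule sum.cong[OF refl], rule f2, simp)
  have e3: "X $$ (i,k) * (T1 * X) $$ (i,k) + X $$ (i,k) * (X * T2) $$ (i,k) = X $$ (i,k) * (T1 * X + X * T2) $$ (i,k)"
    if "i < n" "k < n" for i k
  proof -
    have "(T1 * X + X * T2) $$ (i,k) = (T1 * X) $$ (i,k) + (X * T2) $$ (i,k)"
      using that X T2c by (intro index_add_mat(1), auto)
    thus ?thesis by (simp add: distrib_left)
  qed
  have "F1 + F2 = (\<Sum>k\<in>{0..<n}. \<Sum>i\<in>{0..<n}. X $$ (i,k) * (T1 * X + X * T2) $$ (i,k))"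
    unfolding e1 e2 sum.distrib[symmetric] by (rule sum.cong[OF refl], rule sum.cong[OF refl], rule e3, auto)
  also have "\<dots> = 0" unfolding Z by (rule sum.neutral, auto)
  finally have sum0: "F1 + F2 = 0" .
  have F1ge: "F1 \<ge> 0" unfolding F1_def by (rule sum_nonneg, rule nn[OF T1], insert X, auto)
  have F2ge: "F2 \<ge> 0" unfolding F2_def by (rule sum_nonneg, rule nn[OF T2], insert X, auto)
  have F1z: "F1 = 0" using sum0 F1ge F2ge by linarith
  have "col X k = 0\<^sub>v n" if k: "k < n" for k
  proof (rule ccontr)
    assume ne: "col X k \<noteq> 0\<^sub>v n"
    have cX: "col X k \<in> carrier_vec n" using col_carrier_vec[OF k X] .
    have pd: "\<forall>x\<in>carrier_vec n. x \<noteq> 0\<^sub>v n \<longrightarrow> x \<bullet> (T1 *\<^sub>v x) > 0" using T1 unfolding spd_mat_def by auto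
    have pos: "col X k \<bullet> (T1 *\<^sub>v col X k) > 0" using pd cX ne by blast
    have "col X k \<bullet> (T1 *\<^sub>v col X k) \<le> F1" unfolding F1_def
    proof (rule member_le_sum)
      fix x assume "x \<in> {0..<n} - {k}"
      hence "x < n" by auto
      thus "0 \<le> col X x \<bullet> (T1 *\<^sub>v col X x)" by (intro nn[OF T1] col_carrier_vec[OF _ X])
    qed (insert k, auto)
    thus False using pos F1z by linarith
  qed
  then show ?thesis
  proof (intro eq_matI)
    fix i j assume "i < dim_row (0\<^sub>m n n :: real mat)" "j < dim_col (0\<^sub>m n n :: real mat)"
    hence i: "i < n" and j: "j < n" by auto
    have "X $$ (i,j) = col X j $ i" using i j X by simp
    also have "\<dots> = 0" using \<open>\<And>k. k < n \<Longrightarrow> col X k = 0\<^sub>v n\<close>[OF j] i by simp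
    finally show "X $$ (i,j) = 0\<^sub>m n n $$ (i,j)" using i j by simp
  qed (insert X, auto)
qed

lemma spd_sqrt_unique:
  fixes T1 T2 :: "real mat"
  assumes T1: "spd_mat n T1" and T2: "spd_mat n T2" and eq: "T1 * T1 = T2 * T2"
  shows "T1 = T2"
proof -
  have T1c: "T1 \<in> carrier_mat n n" and T2c: "T2 \<in> carrier_mat n n"
    using T1 T2 unfolding spd_mat_def by auto
  have Z: "T1 * (T1 - T2) + (T1 - T2) * T2 = 0\<^sub>m n n"
  proof -
    have "T1 * (T1 - T2) + (T1 - T2) * T2 = (T1 * T1 - T1 * T2) + (T1 * T2 - T2 * T2)"
      using T1c T2c by (simp add: mult_minus_distrib_mat minus_mult_distrib_mat)
    also have "\<dots> = 0\<^sub>m n n" unfolding eq using T1c T2c by (intro eq_matI, auto)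
    finally show ?thesis .
  qed
  have Xc: "T1 - T2 \<in> carrier_mat n n" by (rule minus_carrier_mat[OF T2c])
  from sylv_zero[OF T1 T2 Xc Z] have z: "T1 - T2 = 0\<^sub>m n n" .
  show ?thesis
  proof (rule eq_matI)
    fix i j assume "i < dim_row T2" "j < dim_col T2"
    hence i: "i < n" and j: "j < n" using T2c by auto
    have "(T1 - T2) $$ (i,j) = T1 $$ (i,j) - T2 $$ (i,j)" using i j T2c by (intro index_minus_mat(1), auto)
    moreover have "(0\<^sub>m n n :: real mat) $$ (i,j) = 0" using i j by (rule index_zero_mat(1))
    ultimately show "T1 $$ (i,j) = T2 $$ (i,j)" using z by simp
  qed (insert T1c T2c, auto)
qed


definition dmat :: "nat \<Rightarrow> (nat \<Rightarrow> real) \<Rightarrow> real mat" where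
  "dmat n f = mat n n (\<lambda>(i,j). if i = j then f i else 0)"

lemma mat_vec_zero[simp]: "A \<in> carrier_mat nr n \<Longrightarrow> A *\<^sub>v 0\<^sub>v n = (0\<^sub>v nr :: real vec)"
  by (intro eq_vecI, auto)

lemma triple_mv: fixes A B C :: "real mat"
  assumes "A \<in> carrier_mat n n" "B \<in> carrier_mat n n" "C \<in> carrier_mat n n" "x \<in> carrier_vec n"
  shows "(A * B * C) *\<^sub>v x = A *\<^sub>v (B *\<^sub>v (C *\<^sub>v x))"
proof -
  have "(A * B * C) *\<^sub>v x = (A * B) *\<^sub>v (C *\<^sub>v x)" using assms by (intro assoc_mult_mat_vec[of _ n n], auto)
  also have "\<dots> = A *\<^sub>v (B *\<^sub>v (C *\<^sub>v x))" using assms by (intro assoc_mult_mat_vec[of _ n n], auto)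
  finally show ?thesis .
qed

lemma sym_conj: fixes U E :: "real mat"
  assumes U: "U \<in> carrier_mat n n" and E: "E \<in> carrier_mat n n" and ET: "transpose_mat E = E"
  shows "transpose_mat (U * E * transpose_mat U) = U * E * transpose_mat U"
proof -
  have "transpose_mat (U * E * transpose_mat U) = U * transpose_mat (U * E)"
    using U E by (subst transpose_mult[of _ n n _ n], auto)
  also have "\<dots> = U * (E * transpose_mat U)" using U E ET by (subst transpose_mult[of _ n n _ n], auto)
  also have "\<dots> = U * E * transpose_mat U" using U E by (simp add: assoc_mult_mat[of _ n n _ n _ n])
  finally show ?thesis .
qed

lemma dmat_carrier[simp]: "dmat n f \<in> carrier_mat n n" unfolding dmat_def by simp

lemma dmat_mult: "dmat n f * dmat n g = dmat n (\<lambda>i. f i * g i)"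
proof (rule eq_matI)
  fix i j assume "i < dim_row (dmat n (\<lambda>i. f i * g i))" "j < dim_col (dmat n (\<lambda>i. f i * g i))"
  hence i: "i < n" and j: "j < n" unfolding dmat_def by auto
  have "(dmat n f * dmat n g) $$ (i,j) = (\<Sum>k\<in>{0..<n}. (if i = k then f i else 0) * (if k = j then g k else 0))"
    using i j unfolding dmat_def by (simp add: scalar_prod_def)
  also have "\<dots> = (\<Sum>k\<in>{0..<n}. if k = i then f i * (if i = j then g i else 0) else 0)"
    by (rule sum.cong, auto)
  also have "\<dots> = (if i = j then f i * g i else 0)" using i by simp
  finally show "(dmat n f * dmat n g) $$ (i,j) = dmat n (\<lambda>i. f i * g i) $$ (i,j)"
    using i j unfolding dmat_def by simp
qed (auto simp: dmat_def)

lemma dmat_transpose[simp]: "transpose_mat (dmat n f) = dmat n f"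
  unfolding dmat_def by (rule eq_matI, auto)

lemma dmat_one: "(\<And>i. i < n \<Longrightarrow> f i = 1) \<Longrightarrow> dmat n f = 1\<^sub>m n"
  unfolding dmat_def by (rule eq_matI, auto)

lemma dmat_quad: assumes y: "y \<in> carrier_vec n"
  shows "y \<bullet> (dmat n f *\<^sub>v y) = (\<Sum>i\<in>{0..<n}. f i * (y $ i)^2)"
proof -
  have "(dmat n f *\<^sub>v y) $ i = f i * y $ i" if i: "i < n" for i
  proof -
    have "(dmat n f *\<^sub>v y) $ i = (\<Sum>k\<in>{0..<n}. (if i = k then f i else 0) * y $ k)"
      using i y unfolding dmat_def by (simp add: scalar_prod_def)
    also have "\<dots> = (\<Sum>k\<in>{0..<n}. if k = i then f i * y $ i else 0)" by (rule sum.cong, auto)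
    also have "\<dots> = f i * y $ i" using i by simp
    finally show ?thesis .
  qed
  note fact = this
  have dimv: "dim_vec (dmat n f *\<^sub>v y) = n" by (simp add: dmat_def)
  show ?thesis unfolding scalar_prod_def dimv
  proof (rule sum.cong[OF refl])
    fix i assume "i \<in> {0..<n}"
    hence "i < n" by simp
    thus "y $ i * (dmat n f *\<^sub>v y) $ i = f i * (y $ i)^2" using fact[of i] by (simp add: power2_eq_square)
  qed
qed

lemma inv_sqrt_exists:
  fixes A :: "real mat"
  assumes A: "A \<in> carrier_mat n n" and sym: "transpose_mat A = A"
    and pd: "\<forall>x \<in> carrier_vec n. x \<noteq> 0\<^sub>v n \<longrightarrow> x \<bullet> (A *\<^sub>v x) > 0"
  shows "\<exists>S. spd_mat n S \<and> S * S * A = 1\<^sub>m n"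
proof -
  from spectral[OF A sym] obtain U D where U: "U \<in> carrier_mat n n" and D: "D \<in> carrier_mat n n"
    and UU: "transpose_mat U * U = 1\<^sub>m n" and diag: "\<forall>i<n. \<forall>j<n. i \<noteq> j \<longrightarrow> D $$ (i,j) = 0"
    and Aeq: "A = U * D * transpose_mat U" by blast
  have UT: "transpose_mat U \<in> carrier_mat n n" using U by simp
  have UU2: "U * transpose_mat U = 1\<^sub>m n" using mat_mult_left_right_inverse[OF UT U UU] .
  define d where "d i = D $$ (i,i)" for i
  have Dd: "D = dmat n d" unfolding dmat_def d_def using D diag by (intro eq_matI, auto)
  have dpos: "d i > 0" if i: "i < n" for i
  proof -
    define x where "x = col U i"
    have x: "x \<in> carrier_vec n" unfolding x_def using U i by simp
    have Ux: "transpose_mat U *\<^sub>v x = unit_vec n i"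
      unfolding x_def using col_mult2[OF UT U i] UU i by simp
    have x0: "x \<noteq> 0\<^sub>v n"
    proof
      assume "x = 0\<^sub>v n"
      hence "transpose_mat U *\<^sub>v x = 0\<^sub>v n" using UT by simp
      hence "unit_vec n i $ i = (0\<^sub>v n :: real vec) $ i" using Ux by simp
      thus False using i by simp
    qed
    have "x \<bullet> (A *\<^sub>v x) = x \<bullet> (U *\<^sub>v (D *\<^sub>v (transpose_mat U *\<^sub>v x)))"
      unfolding Aeq using triple_mv[OF U D UT x] by simp
    also have "\<dots> = (transpose_mat U *\<^sub>v x) \<bullet> (D *\<^sub>v (transpose_mat U *\<^sub>v x))"
      using transpose_vec_mult_scalar[OF U _ x, of "D *\<^sub>v (transpose_mat U *\<^sub>v x)"] D UT x by simp
    also have "\<dots> = (\<Sum>k\<in>{0..<n}. d k * ((unit_vec n i) $ k)^2)" unfolding Ux Dd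
      by (rule dmat_quad, simp)
    also have "\<dots> = (\<Sum>k\<in>{0..<n}. if k = i then d i else 0)"
      by (rule sum.cong, auto simp: unit_vec_def)
    also have "\<dots> = d i" using i by simp
    finally show ?thesis using pd x x0 by auto
  qed
  define E where "E = dmat n (\<lambda>i. 1 / sqrt (d i))"
  have E: "E \<in> carrier_mat n n" unfolding E_def by simp
  define S where "S = U * E * transpose_mat U"
  have S: "S \<in> carrier_mat n n" unfolding S_def using U E by simp
  have ST: "transpose_mat S = S" unfolding S_def by (rule sym_conj[OF U E], simp add: E_def)
  have EED: "E * E * D = 1\<^sub>m n" unfolding E_def Dd dmat_mult
  proof (rule dmat_one)
    fix i assume i: "i < n"
    have "d i > 0" using dpos[OF i] .
    thus "1 / sqrt (d i) * (1 / sqrt (d i)) * d i = 1" by (simp add: field_simps)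
  qed
  have cancel: "transpose_mat U * (U * Z) = Z" if "Z \<in> carrier_mat n k" for Z k
    using that U UT by (simp flip: assoc_mult_mat[OF UT U that] add: UU)
  have "S * S * A = U * (E * (transpose_mat U * (U * (E * (transpose_mat U * (U * (D * transpose_mat U)))))))"
    unfolding S_def Aeq using U E D by (simp add: assoc_mult_mat[of _ n n _ n _ n])
  also have "\<dots> = U * (E * (E * (D * transpose_mat U)))"
    using U E D by (simp add: cancel[of _ n])
  also have "\<dots> = U * ((E * E * D) * transpose_mat U)"
    using U E D by (simp add: assoc_mult_mat[of _ n n _ n _ n])
  also have "\<dots> = 1\<^sub>m n" unfolding EED using U UU2 by simp
  finally have SSA: "S * S * A = 1\<^sub>m n" .
  have "spd_mat n S" unfolding spd_mat_def
  proof (intro conjI ballI impI S ST)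
    fix x :: "real vec" assume x: "x \<in> carrier_vec n" and x0: "x \<noteq> 0\<^sub>v n"
    define y where "y = transpose_mat U *\<^sub>v x"
    have y: "y \<in> carrier_vec n" unfolding y_def using UT x by simp
    have y0: "y \<noteq> 0\<^sub>v n"
    proof
      assume "y = 0\<^sub>v n"
      hence "U *\<^sub>v y = 0\<^sub>v n" using U by simp
      moreover have "U *\<^sub>v y = x" unfolding y_def using U UT x UU2
        by (simp flip: assoc_mult_mat_vec[OF U UT x])
      ultimately show False using x0 by simp
    qed
    have "x \<bullet> (S *\<^sub>v x) = x \<bullet> (U *\<^sub>v (E *\<^sub>v y))"
      unfolding S_def y_def using triple_mv[OF U E UT x] by simp
    also have "\<dots> = y \<bullet> (E *\<^sub>v y)" unfolding y_def
      using transpose_vec_mult_scalar[OF U _ x, of "E *\<^sub>v (transpose_mat U *\<^sub>v x)"] E UT x by simp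
    also have "\<dots> = (\<Sum>i\<in>{0..<n}. (1 / sqrt (d i)) * (y $ i)^2)" unfolding E_def by (rule dmat_quad[OF y])
    also have "\<dots> > 0"
    proof -
      from y y0 obtain i where i: "i < n" and yi: "y $ i \<noteq> 0"
        by (metis carrier_vecD eq_vecI index_zero_vec(1) index_zero_vec(2))
      have "(1 / sqrt (d i)) * (y $ i)^2 > 0" using dpos[OF i] yi by simp
      moreover have "(1 / sqrt (d i)) * (y $ i)^2 \<le> (\<Sum>i\<in>{0..<n}. (1 / sqrt (d i)) * (y $ i)^2)"
      proof (rule member_le_sum)
        fix k assume "k \<in> {0..<n} - {i}"
        hence "d k > 0" using dpos by auto
        thus "0 \<le> (1 / sqrt (d k)) * (y $ k)^2" by simp
      qed (insert i, auto)
      ultimately show ?thesis by linarith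
    qed
    finally show "x \<bullet> (S *\<^sub>v x) > 0" .
  qed
  thus ?thesis using SSA by blast
qed


definition idx :: "nat \<Rightarrow> nat \<Rightarrow> nat" where "idx j r = (if r < j then r else Suc r)"

lemma idx_ne: "idx j r \<noteq> j" unfolding idx_def by auto
lemma idx_inj: "idx j r = idx j s \<longleftrightarrow> r = s" unfolding idx_def by auto
lemma idx_lt: "r < n - 1 \<Longrightarrow> idx j r < n" unfolding idx_def by auto

lemma ds_carrier: "diff_step v j \<in> carrier_mat (dim_vec v - 1) (dim_vec v)"
  unfolding diff_step_def by simp

lemma ds_entry: assumes "r < dim_vec v - 1" "c < dim_vec v"
  shows "diff_step v j $$ (r,c) = (if v $ idx j r = 0 then (if c = idx j r then 1 else 0)
     else (if c = idx j r then 1 / v $ idx j r else 0) - (if c = j then 1 / v $ j else 0))"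
  using assms unfolding diff_step_def idx_def Let_def by simp

lemma ds_kill: assumes j: "j < dim_vec v" and vj: "v $ j \<noteq> 0"
  shows "diff_step v j *\<^sub>v v = 0\<^sub>v (dim_vec v - 1)"
proof (rule eq_vecI)
  let ?n = "dim_vec v"
  fix r assume "r < dim_vec (0\<^sub>v (dim_vec v - 1) :: real vec)"
  hence r: "r < ?n - 1" by simp
  define i where "i = idx j r"
  have i: "i < ?n" unfolding i_def using idx_lt[OF r] .
  have ij: "i \<noteq> j" unfolding i_def by (rule idx_ne)
  have "(diff_step v j *\<^sub>v v) $ r = (\<Sum>c\<in>{0..<?n}. diff_step v j $$ (r,c) * v $ c)"
    using r ds_carrier[of v j] by (simp add: scalar_prod_def)
  also have "\<dots> = 0"
  proof (cases "v $ i = 0")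
    case True
    have "(\<Sum>c\<in>{0..<?n}. diff_step v j $$ (r,c) * v $ c) = (\<Sum>c\<in>{0..<?n}. if c = i then v $ i else 0)"
      by (rule sum.cong[OF refl], insert r True, auto simp: ds_entry i_def)
    also have "\<dots> = 0" using i True by simp
    finally show ?thesis .
  next
    case False
    have "(\<Sum>c\<in>{0..<?n}. diff_step v j $$ (r,c) * v $ c) =
      (\<Sum>c\<in>{0..<?n}. (if c = i then 1 else 0)) - (\<Sum>c\<in>{0..<?n}. (if c = j then 1 else 0))"
      unfolding sum_subtractf[symmetric]
      by (rule sum.cong[OF refl], insert r False vj, auto simp: ds_entry i_def)
    also have "\<dots> = 0" using i j by simp
    finally show ?thesis .
  qed
  finally show "(diff_step v j *\<^sub>v v) $ r = 0\<^sub>v (dim_vec v - 1) $ r" using r by simp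
qed (simp add: diff_step_def)

definition ds_rinv :: "real vec \<Rightarrow> nat \<Rightarrow> real mat" where
  "ds_rinv v j = mat (dim_vec v) (dim_vec v - 1) (\<lambda>(c,s). if c = idx j s then
     (if v $ idx j s = 0 then 1 else v $ idx j s) else 0)"

lemma ds_rinv_carrier: "ds_rinv v j \<in> carrier_mat (dim_vec v) (dim_vec v - 1)"
  unfolding ds_rinv_def by simp

lemma ds_rinv: "diff_step v j * ds_rinv v j = 1\<^sub>m (dim_vec v - 1)"
proof (rule eq_matI)
  let ?n = "dim_vec v"
  fix r s assume "r < dim_row (1\<^sub>m (dim_vec v - 1) :: real mat)" "s < dim_col (1\<^sub>m (dim_vec v - 1) :: real mat)"
  hence r: "r < ?n - 1" and s: "s < ?n - 1" by auto
  define a where "a = (if v $ idx j s = 0 then 1 else v $ idx j s)"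
  have sI: "idx j s < ?n" using idx_lt[OF s] .
  have "(diff_step v j * ds_rinv v j) $$ (r,s) = (\<Sum>c\<in>{0..<?n}. diff_step v j $$ (r,c) * ds_rinv v j $$ (c,s))"
    using r s ds_carrier[of v j] ds_rinv_carrier[of v j] by (simp add: scalar_prod_def)
  also have "\<dots> = (\<Sum>c\<in>{0..<?n}. if c = idx j s then diff_step v j $$ (r, idx j s) * a else 0)"
    by (rule sum.cong[OF refl], insert s, auto simp: ds_rinv_def a_def)
  also have "\<dots> = diff_step v j $$ (r, idx j s) * a" using sI by simp
  also have "\<dots> = 1\<^sub>m (?n - 1) $$ (r,s)"
    using r s sI unfolding a_def by (auto simp: ds_entry idx_inj idx_ne)
  finally show "(diff_step v j * ds_rinv v j) $$ (r,s) = 1\<^sub>m (?n - 1) $$ (r,s)" .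
qed (insert ds_carrier[of v j] ds_rinv_carrier[of v j], auto)


lemma Suc_sub: "(n::nat) - Suc k = n - k - 1" by simp

lemma dG_carrier: assumes G: "G \<in> carrier_mat N M"
  shows "diff_G js G k \<in> carrier_mat (N-k) M \<and> diff_Gamma js G k \<in> carrier_mat (N-k) N
    \<and> diff_G js G k = diff_Gamma js G k * G"
proof (induction k)
  case 0
  then show ?case using G by simp
next
  case (Suc k)
  let ?v = "col (diff_G js G k) k"
  let ?D = "diff_step ?v (js (Suc k))"
  have Gk0: "diff_G js G k \<in> carrier_mat (N-k) M" using Suc by blast
  have dv: "dim_vec ?v = N - k" using carrier_matD(1)[OF Gk0] by simp
  have D: "?D \<in> carrier_mat (N - Suc k) (N - k)" using ds_carrier[of ?v "js (Suc k)"] unfolding dv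
    by (simp only: Suc_sub)
  from Suc have Gk: "diff_G js G k \<in> carrier_mat (N-k) M" and Gak: "diff_Gamma js G k \<in> carrier_mat (N-k) N"
    and eq: "diff_G js G k = diff_Gamma js G k * G" by auto
  show ?case using D Gk Gak G unfolding diff_G.simps diff_Gamma.simps
    by (simp add: eq assoc_mult_mat[of _ "N - Suc k" "N-k" _ N _ M])
qed

lemma adm_facts: assumes adm: "admissible_refs js G" and G: "G \<in> carrier_mat N M" and k: "k < M"
  shows "js (Suc k) < N - k \<and> col (diff_G js G k) k $ js (Suc k) \<noteq> 0 \<and> 2 \<le> N - k"
proof -
  let ?v = "col (diff_G js G k) k"
  have Gk0: "diff_G js G k \<in> carrier_mat (N-k) M" using dG_carrier[OF G, of js k] by blast
  have dv: "dim_vec ?v = N - k" using carrier_matD(1)[OF Gk0] by simp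
  from adm[unfolded admissible_refs_def] k G have
    c: "2 \<le> card {i. i < dim_vec ?v \<and> ?v $ i \<noteq> 0}" and j: "js (Suc k) < dim_vec ?v"
    and vj: "?v $ js (Suc k) \<noteq> 0" unfolding Let_def by auto
  have "card {i. i < dim_vec ?v \<and> ?v $ i \<noteq> 0} \<le> card {0..<dim_vec ?v}"
    by (rule card_mono, auto)
  with c have "2 \<le> dim_vec ?v" by simp
  thus ?thesis using j vj dv by simp
qed

lemma M_le_N: assumes adm: "admissible_refs js G" and G: "G \<in> carrier_mat N M"
  shows "M < N \<or> M = 0"
proof (cases M)
  case (Suc m)
  from adm_facts[OF adm G, of m] Suc show ?thesis by auto
qed simp

lemma dG_zero: assumes adm: "admissible_refs js G" and G: "G \<in> carrier_mat N M"
  shows "k \<le> M \<Longrightarrow> c < k \<Longrightarrow> col (diff_G js G k) c = 0\<^sub>v (N-k)"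
proof (induction k arbitrary: c)
  case 0
  then show ?case by simp
next
  case (Suc k)
  let ?v = "col (diff_G js G k) k"
  let ?D = "diff_step ?v (js (Suc k))"
  have k: "k < M" using Suc by simp
  have Gk0: "diff_G js G k \<in> carrier_mat (N-k) M" using dG_carrier[OF G, of js k] by blast
  have dv: "dim_vec ?v = N - k" using carrier_matD(1)[OF Gk0] by simp
  have D: "?D \<in> carrier_mat (N - Suc k) (N - k)" using ds_carrier[of ?v "js (Suc k)"] unfolding dv
    by (simp only: Suc_sub)
  have Gk: "diff_G js G k \<in> carrier_mat (N-k) M" using dG_carrier[OF G, of js k] by blast
  have cM: "c < M" using Suc by simp
  have "col (diff_G js G (Suc k)) c = ?D *\<^sub>v col (diff_G js G k) c"
    unfolding diff_G.simps using col_mult2[OF D Gk cM] .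
  also have "\<dots> = 0\<^sub>v (N - Suc k)"
  proof (cases "c < k")
    case True
    then show ?thesis using Suc.IH[of c] k D by simp
  next
    case False
    with Suc have c: "c = k" by simp
    from adm_facts[OF adm G k] dv have "js (Suc k) < dim_vec ?v" "?v $ js (Suc k) \<noteq> 0" by auto
    from ds_kill[OF this] show ?thesis unfolding c dv by (simp only: Suc_sub)
  qed
  finally show ?case .
qed

lemma Gamma_G_zero: assumes adm: "admissible_refs js G" and G: "G \<in> carrier_mat N M"
  shows "diff_Gamma js G M * G = 0\<^sub>m (N - M) M"
proof -
  have C: "diff_G js G M \<in> carrier_mat (N-M) M" and eq: "diff_G js G M = diff_Gamma js G M * G"
    using dG_carrier[OF G, of js M] by auto
  show ?thesis unfolding eq[symmetric]
  proof (rule eq_matI)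
    fix i c assume "i < dim_row (0\<^sub>m (N - M) M :: real mat)" "c < dim_col (0\<^sub>m (N - M) M :: real mat)"
    hence i: "i < N - M" and c: "c < M" by auto
    have "diff_G js G M $$ (i,c) = col (diff_G js G M) c $ i" using C i c by simp
    also have "\<dots> = 0" using dG_zero[OF adm G le_refl c] i by simp
    finally show "diff_G js G M $$ (i,c) = 0\<^sub>m (N - M) M $$ (i,c)" using i c by simp
  qed (insert C, auto)
qed

lemma Gamma_rinv: assumes G: "G \<in> carrier_mat N M"
  shows "\<exists>R. R \<in> carrier_mat N (N-k) \<and> diff_Gamma js G k * R = 1\<^sub>m (N-k)"
proof (induction k)
  case 0
  have dG: "dim_row G = N" using G by blast
  show ?case by (rule exI[of _ "1\<^sub>m N"], simp add: dG)
next
  case (Suc k)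
  then obtain R where R: "R \<in> carrier_mat N (N-k)" and GR: "diff_Gamma js G k * R = 1\<^sub>m (N-k)" by blast
  let ?v = "col (diff_G js G k) k"
  let ?D = "diff_step ?v (js (Suc k))"
  let ?R = "ds_rinv ?v (js (Suc k))"
  have Gk0: "diff_G js G k \<in> carrier_mat (N-k) M" using dG_carrier[OF G, of js k] by blast
  have dv: "dim_vec ?v = N - k" using carrier_matD(1)[OF Gk0] by simp
  have D: "?D \<in> carrier_mat (N - Suc k) (N - k)" using ds_carrier[of ?v "js (Suc k)"] unfolding dv
    by (simp only: Suc_sub)
  have RD: "?R \<in> carrier_mat (N - k) (N - Suc k)" using ds_rinv_carrier[of ?v "js (Suc k)"] unfolding dv
    by (simp only: Suc_sub)
  have DR: "?D * ?R = 1\<^sub>m (N - Suc k)" using ds_rinv[of ?v "js (Suc k)"] unfolding dv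
    by (simp only: Suc_sub)
  have Gak: "diff_Gamma js G k \<in> carrier_mat (N-k) N" using dG_carrier[OF G, of js k] by simp
  have RR: "R * ?R \<in> carrier_mat N (N - Suc k)" using R RD by simp
  have e1: "diff_Gamma js G (Suc k) * (R * ?R) = ?D * (diff_Gamma js G k * (R * ?R))"
    unfolding diff_Gamma.simps by (rule assoc_mult_mat[OF D Gak RR])
  have e2: "diff_Gamma js G k * (R * ?R) = (diff_Gamma js G k * R) * ?R"
    by (rule assoc_mult_mat[OF Gak R RD, symmetric])
  have "diff_Gamma js G (Suc k) * (R * ?R) = 1\<^sub>m (N - Suc k)"
    unfolding e1 e2 GR left_mult_one_mat[OF RD] by (rule DR)
  thus ?case using R RD by (intro exI[of _ "R * ?R"], auto)
qed


lemma triv_kernel_inv: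
  fixes A :: "real mat"
  assumes A: "A \<in> carrier_mat n n" and ker: "\<And>v. v \<in> carrier_vec n \<Longrightarrow> A *\<^sub>v v = 0\<^sub>v n \<Longrightarrow> v = 0\<^sub>v n"
  shows "\<exists>B. B \<in> carrier_mat n n \<and> A * B = 1\<^sub>m n \<and> B * A = 1\<^sub>m n"
proof -
  have "det A \<noteq> 0" using det_0_iff_vec_prod_zero[OF A] ker by blast
  from det_non_zero_imp_unit[OF A this, of undefined]
  show ?thesis unfolding Units_def ring_mat_def by auto
qed

lemma inv_invertible:
  fixes A B :: "real mat"
  assumes A: "A \<in> carrier_mat n n" and B: "B \<in> carrier_mat n n" and AB: "A * B = 1\<^sub>m n" and BA: "B * A = 1\<^sub>m n"
  shows "invertible_mat A"
  unfolding invertible_mat_def inverts_mat_def square_mat.simps using A B AB BA by auto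

lemma mat_inv_eq:
  fixes A B :: "real mat"
  assumes A: "A \<in> carrier_mat n n" and B: "B \<in> carrier_mat n n" and AB: "A * B = 1\<^sub>m n" and BA: "B * A = 1\<^sub>m n"
  shows "mat_inv A = B"
  unfolding mat_inv_def
proof (rule the_equality)
  show "B \<in> carrier_mat (dim_row A) (dim_row A) \<and> A * B = 1\<^sub>m (dim_row A) \<and> B * A = 1\<^sub>m (dim_row A)"
    using A B AB BA by auto
next
  fix B' assume "B' \<in> carrier_mat (dim_row A) (dim_row A) \<and> A * B' = 1\<^sub>m (dim_row A) \<and> B' * A = 1\<^sub>m (dim_row A)"
  hence B': "B' \<in> carrier_mat n n" and B'A: "B' * A = 1\<^sub>m n" using A by auto
  have "B' = B' * (A * B)" using AB B' by simp
  also have "\<dots> = (B' * A) * B" using B' A B by (simp add: assoc_mult_mat)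
  also have "\<dots> = B" using B'A B by simp
  finally show "B' = B" .
qed

lemma fullrank_inj:
  fixes A :: "real mat"
  assumes A: "A \<in> carrier_mat n nc" and rk: "vec_space.rank n A = nc"
    and x: "x \<in> carrier_vec nc" and Ax: "A *\<^sub>v x = 0\<^sub>v n"
  shows "x = 0\<^sub>v nc"
proof -
  interpret vec_space "TYPE(real)" n .
  have dist: "distinct (cols A)"
  proof (rule ccontr)
    assume nd: "\<not> distinct (cols A)"
    obtain S where S: "maximal S (\<lambda>T. T \<subseteq> set (cols A) \<and> lin_indpt T)"
      using maximal_exists[of "(\<lambda>T. T \<subseteq> set (cols A) \<and> lin_indpt T)" "card (set (cols A))" "{}"]
      by (meson List.finite_set card_mono empty_iff empty_subsetI finite_lin_indpt2 rev_finite_subset)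
    then have "card S \<le> card (set (cols A))" by (simp add: card_mono maximal_def)
    moreover have "card (set (cols A)) < length (cols A)"
      using nd card_length[of "cols A"] distinct_card[of "cols A"] by (metis antisym_conv2 card_distinct)
    moreover have "length (cols A) = nc" using A by simp
    ultimately have "card S < nc" by linarith
    with rank_card_indpt[OF A S] rk show False by simp
  qed
  have li: "lin_indpt (set (cols A))" using full_rank_lin_indpt[OF A rk dist] .
  show ?thesis
  proof (rule ccontr)
    assume "x \<noteq> 0\<^sub>v nc"
    from lin_depI[OF A x this Ax dist] li show False by simp
  qed
qed


lemma HG_inj:
  fixes H G :: "real mat"
  assumes H: "H \<in> carrier_mat N L" and G: "G \<in> carrier_mat N M"
    and rk: "vec_space.rank N (mat_of_cols N (cols H @ cols G)) = L + M"
    and a: "a \<in> carrier_vec L" and d: "d \<in> carrier_vec M" and eq: "H *\<^sub>v a + G *\<^sub>v d = 0\<^sub>v N"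
  shows "a = 0\<^sub>v L \<and> d = 0\<^sub>v M"
proof -
  let ?A = "mat_of_cols N (cols H @ cols G)"
  have A: "?A \<in> carrier_mat N (L+M)" using mat_of_cols_carrier(1)[of N "cols H @ cols G"] H G by simp
  have blk: "?A = four_block_mat H G (0\<^sub>m 0 L) (0\<^sub>m 0 M)"
  proof (rule eq_matI)
    fix i c assume "i < dim_row (four_block_mat H G (0\<^sub>m 0 L) (0\<^sub>m 0 M))"
      "c < dim_col (four_block_mat H G (0\<^sub>m 0 L) (0\<^sub>m 0 M))"
    hence i: "i < N" and c: "c < L + M" using H G by auto
    have "?A $$ (i,c) = (cols H @ cols G) ! c $ i" using i c H G by (simp add: mat_of_cols_index)
    also have "\<dots> = (if c < L then H $$ (i,c) else G $$ (i, c - L))"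
      using i c H G by (auto simp: nth_append)
    also have "\<dots> = four_block_mat H G (0\<^sub>m 0 L) (0\<^sub>m 0 M) $$ (i,c)" using i c H G by simp
    finally show "?A $$ (i,c) = four_block_mat H G (0\<^sub>m 0 L) (0\<^sub>m 0 M) $$ (i,c)" .
  qed (insert A H G, auto)
  have ad: "a @\<^sub>v d \<in> carrier_vec (L+M)" using a d by simp
  have "?A *\<^sub>v (a @\<^sub>v d) = (H *\<^sub>v a + G *\<^sub>v d) @\<^sub>v (0\<^sub>m 0 L *\<^sub>v a + 0\<^sub>m 0 M *\<^sub>v d)"
    unfolding blk by (rule four_block_mat_mult_vec[OF H G _ _ a d], auto)
  also have "\<dots> = 0\<^sub>v N" unfolding eq by (intro eq_vecI, auto)
  finally have "?A *\<^sub>v (a @\<^sub>v d) = 0\<^sub>v N" .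
  from fullrank_inj[OF A rk ad this] have z: "a @\<^sub>v d = 0\<^sub>v (L+M)" .
  have "a = 0\<^sub>v L"
  proof (rule eq_vecI)
    fix i assume "i < dim_vec (0\<^sub>v L :: real vec)"
    hence i: "i < L" by simp
    have "(a @\<^sub>v d) $ i = a $ i" using i a d by simp
    thus "a $ i = 0\<^sub>v L $ i" using z i by simp
  qed (insert a, auto)
  moreover have "d = 0\<^sub>v M"
  proof (rule eq_vecI)
    fix i assume "i < dim_vec (0\<^sub>v M :: real vec)"
    hence i: "i < M" by simp
    have "(a @\<^sub>v d) $ (L + i) = d $ i" using i a d by simp
    thus "d $ i = 0\<^sub>v M $ i" using z i by simp
  qed (insert d, auto)
  ultimately show ?thesis by simp
qed

lemma fix_one:
  fixes E :: "real mat"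
  assumes E: "E \<in> carrier_mat n n" and fx: "\<And>w. w \<in> carrier_vec n \<Longrightarrow> E *\<^sub>v w = w"
  shows "E = 1\<^sub>m n"
proof (rule eq_matI)
  fix i j assume "i < dim_row (1\<^sub>m n :: real mat)" "j < dim_col (1\<^sub>m n :: real mat)"
  hence i: "i < n" and j: "j < n" by auto
  have "E $$ (i,j) = (E *\<^sub>v unit_vec n j) $ i" using E i j by simp
  also have "\<dots> = unit_vec n j $ i" using fx[of "unit_vec n j"] by simp
  also have "\<dots> = 1\<^sub>m n $$ (i,j)" using i j by simp
  finally show "E $$ (i,j) = 1\<^sub>m n $$ (i,j)" .
qed (insert E, auto)


lemma rank_rinv:
  fixes A R :: "real mat"
  assumes A: "A \<in> carrier_mat n m" and R: "R \<in> carrier_mat m n" and AR: "A * R = 1\<^sub>m n"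
  shows "vec_space.rank n A = n"
proof -
  interpret vec_space "TYPE(real)" n .
  have cs: "set (cols A) \<subseteq> carrier_vec n" using A cols_dim by blast
  have sp: "span (set (cols A)) = carrier_vec n"
  proof
    show "span (set (cols A)) \<subseteq> carrier_vec n" using span_is_subset2[OF cs] by simp
  next
    show "carrier_vec n \<subseteq> span (set (cols A))"
    proof
      fix y :: "real vec" assume y: "y \<in> carrier_vec n"
      define w where "w = R *\<^sub>v y"
      have w: "w \<in> carrier_vec m" unfolding w_def using R y by simp
      have "y = A *\<^sub>v w" unfolding w_def using assoc_mult_mat_vec[OF A R y, symmetric] AR y by simp
      also have "\<dots> = mat_of_cols n (cols A) *\<^sub>v vec (length (cols A)) (\<lambda>i. w $ i)"
      proof -
        have "mat_of_cols n (cols A) = A" using mat_of_cols_cols[of A] A by simp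
        moreover have "vec (length (cols A)) (\<lambda>i. w $ i) = w" using A w by (intro eq_vecI, auto)
        ultimately show ?thesis by simp
      qed
      also have "\<dots> = lincomb_list (\<lambda>i. w $ i) (cols A)"
        by (rule lincomb_list_as_mat_mult[symmetric], insert cs, auto)
      also have "\<dots> \<in> span_list (cols A)" unfolding span_list_def by auto
      also have "span_list (cols A) = span (set (cols A))" by (rule span_list_as_span[OF cs])
      finally show "y \<in> span (set (cols A))" .
    qed
  qed
  have "rank A = vectorspace.dim class_ring (V\<lparr>carrier := carrier_vec n\<rparr>)"
    unfolding rank_def sp by simp
  also have "V\<lparr>carrier := carrier_vec n\<rparr> = V" by simp
  also have "vectorspace.dim class_ring V = n" by (rule dim_is_n)
  finally show ?thesis .
qed


lemma zero_mv[simp]: "v \<in> carrier_vec n \<Longrightarrow> 0\<^sub>m nr n *\<^sub>v v = (0\<^sub>v nr :: real vec)"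
  by (intro eq_vecI, auto)

lemma assoc4: fixes A B C D :: "real mat"
  assumes "A \<in> carrier_mat n1 n2" "B \<in> carrier_mat n2 n3" "C \<in> carrier_mat n3 n4" "D \<in> carrier_mat n4 n5"
  shows "A * B * C * D = A * (B * (C * D))"
proof -
  have "A * B * C * D = A * B * (C * D)" using assms by (intro assoc_mult_mat[of _ n1 n3 _ n4 _ n5], auto)
  also have "\<dots> = A * (B * (C * D))" using assms by (intro assoc_mult_mat[of _ n1 n2 _ n3 _ n5], auto)
  finally show ?thesis .
qed

theorem mainTheorem4:
  fixes H G :: "real mat" and N L M :: nat and js :: "nat \<Rightarrow> nat"
  assumes H: "H \<in> carrier_mat N L"
    and G: "G \<in> carrier_mat N M"
    and rk: "vec_space.rank N (mat_of_cols N (cols H @ cols G)) = L + M"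
    and adm: "admissible_refs js G"
  defines "\<Gamma> \<equiv> diff_Gamma js G M"
  defines "P \<equiv> mat_inv_sqrt (\<Gamma> * transpose_mat \<Gamma>) * \<Gamma>"
  shows "\<Gamma> \<in> carrier_mat (N - M) N \<and>
           vec_space.rank (N - M) \<Gamma> = N - M \<and>
           \<Gamma> * G = 0\<^sub>m (N - M) M \<and>
           (\<exists>!S. is_inv_sqrt S (\<Gamma> * transpose_mat \<Gamma>)) \<and>
           invertible_mat (transpose_mat H * transpose_mat P * P * H) \<and>
           invertible_mat (transpose_mat G * G) \<and>
           invertible_mat (transpose_mat H * proj_perp G * H) \<and>
           (\<forall>y \<in> carrier_vec N.
           mat_inv (transpose_mat H * transpose_mat P * P * H) * transpose_mat H * transpose_mat P * P *\<^sub>v y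
         = mat_inv (transpose_mat H * proj_perp G * H) * transpose_mat H * proj_perp G *\<^sub>v y)"
proof -
  let ?n = "N - M"
  have Ga: "\<Gamma> \<in> carrier_mat ?n N" unfolding \<Gamma>_def using dG_carrier[OF G, of js M] by blast
  have GaT: "transpose_mat \<Gamma> \<in> carrier_mat N ?n" using Ga by simp
  have GT: "transpose_mat G \<in> carrier_mat M N" using G by simp
  have HT: "transpose_mat H \<in> carrier_mat L N" using H by simp
  have GaG: "\<Gamma> * G = 0\<^sub>m ?n M" unfolding \<Gamma>_def by (rule Gamma_G_zero[OF adm G])
  obtain R where R: "R \<in> carrier_mat N ?n" and GaR: "\<Gamma> * R = 1\<^sub>m ?n"
    using Gamma_rinv[OF G, of M js] unfolding \<Gamma>_def by blast
  have NM: "?n + M = N" using M_le_N[OF adm G] by auto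
  have rank: "vec_space.rank ?n \<Gamma> = ?n" by (rule rank_rinv[OF Ga R GaR])
  have Ginj: "d = 0\<^sub>v M" if d: "d \<in> carrier_vec M" and Gd: "G *\<^sub>v d = 0\<^sub>v N" for d
  proof -
    have "H *\<^sub>v 0\<^sub>v L + G *\<^sub>v d = 0\<^sub>v N" using H Gd by simp
    from HG_inj[OF H G rk _ d this] show ?thesis by simp
  qed
  have GtG: "transpose_mat G * G \<in> carrier_mat M M" using G by simp
  have "\<exists>K. K \<in> carrier_mat M M \<and> transpose_mat G * G * K = 1\<^sub>m M \<and> K * (transpose_mat G * G) = 1\<^sub>m M"
  proof (rule triv_kernel_inv[OF GtG])
    fix d :: "real vec" assume d: "d \<in> carrier_vec M" and z: "(transpose_mat G * G) *\<^sub>v d = 0\<^sub>v M"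
    have Gd: "G *\<^sub>v d \<in> carrier_vec N" using G d by simp
    have "(G *\<^sub>v d) \<bullet> (G *\<^sub>v d) = (transpose_mat G *\<^sub>v (G *\<^sub>v d)) \<bullet> d"
      using transpose_vec_mult_scalar[OF G d Gd] by simp
    also have "transpose_mat G *\<^sub>v (G *\<^sub>v d) = 0\<^sub>v M" using z assoc_mult_mat_vec[OF GT G d] by simp
    also have "0\<^sub>v M \<bullet> d = 0" using d by simp
    finally have "(G *\<^sub>v d) \<bullet> (G *\<^sub>v d) = 0" .
    hence "G *\<^sub>v d = 0\<^sub>v N" using real_self_pos[OF Gd] by force
    thus "d = 0\<^sub>v M" using Ginj[OF d] by simp
  qed
  then obtain K where K: "K \<in> carrier_mat M M" and GGK: "transpose_mat G * G * K = 1\<^sub>m M"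
    and KGG: "K * (transpose_mat G * G) = 1\<^sub>m M" by blast
  have Kinv: "mat_inv (transpose_mat G * G) = K" by (rule mat_inv_eq[OF GtG K GGK KGG])
  have invGG: "invertible_mat (transpose_mat G * G)" by (rule inv_invertible[OF GtG K GGK KGG])
  define Gr where "Gr = \<Gamma> * transpose_mat \<Gamma>"
  have Grc: "Gr \<in> carrier_mat ?n ?n" unfolding Gr_def using Ga by simp
  have GrT: "transpose_mat Gr = Gr" unfolding Gr_def using transpose_mult[OF Ga GaT] by simp
  have GaTinj: "x = 0\<^sub>v ?n" if x: "x \<in> carrier_vec ?n" and z: "transpose_mat \<Gamma> *\<^sub>v x = 0\<^sub>v N" for x
  proof -
    have RT: "transpose_mat R \<in> carrier_mat ?n N" using R by simp
    have "transpose_mat R * transpose_mat \<Gamma> = 1\<^sub>m ?n"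
      using transpose_mult[OF Ga R, symmetric] GaR by simp
    hence "x = transpose_mat R *\<^sub>v (transpose_mat \<Gamma> *\<^sub>v x)"
      using assoc_mult_mat_vec[OF RT GaT x] x by simp
    thus ?thesis using z RT by simp
  qed
  have pd: "\<forall>x \<in> carrier_vec ?n. x \<noteq> 0\<^sub>v ?n \<longrightarrow> x \<bullet> (Gr *\<^sub>v x) > 0"
  proof (intro ballI impI)
    fix x :: "real vec" assume x: "x \<in> carrier_vec ?n" and x0: "x \<noteq> 0\<^sub>v ?n"
    have y: "transpose_mat \<Gamma> *\<^sub>v x \<in> carrier_vec N" using GaT x by simp
    have "x \<bullet> (Gr *\<^sub>v x) = x \<bullet> (\<Gamma> *\<^sub>v (transpose_mat \<Gamma> *\<^sub>v x))"
      unfolding Gr_def using assoc_mult_mat_vec[OF Ga GaT x] by simp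
    also have "\<dots> = (transpose_mat \<Gamma> *\<^sub>v x) \<bullet> (transpose_mat \<Gamma> *\<^sub>v x)"
      using transpose_vec_mult_scalar[OF Ga y x] by simp
    also have "\<dots> > 0" using real_self_pos[OF y] GaTinj[OF x] x0 by blast
    finally show "x \<bullet> (Gr *\<^sub>v x) > 0" .
  qed
  have dGr: "dim_row Gr = ?n" using Grc by simp
  from inv_sqrt_exists[OF Grc GrT pd] obtain S0 where "spd_mat ?n S0" "S0 * S0 * Gr = 1\<^sub>m ?n" by blast
  hence ex: "is_inv_sqrt S0 Gr" unfolding is_inv_sqrt_def dGr by simp
  have uniq: "S1 = S2" if S1: "is_inv_sqrt S1 Gr" and S2: "is_inv_sqrt S2 Gr" for S1 S2
  proof -
    have s1: "spd_mat ?n S1" and e1: "S1 * S1 * Gr = 1\<^sub>m ?n" using S1 unfolding is_inv_sqrt_def dGr by auto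
    have s2: "spd_mat ?n S2" and e2: "S2 * S2 * Gr = 1\<^sub>m ?n" using S2 unfolding is_inv_sqrt_def dGr by auto
    have c1: "S1 \<in> carrier_mat ?n ?n" and c2: "S2 \<in> carrier_mat ?n ?n" using s1 s2 unfolding spd_mat_def by auto
    have c22: "S2 * S2 \<in> carrier_mat ?n ?n" using c2 by simp
    have c11: "S1 * S1 \<in> carrier_mat ?n ?n" using c1 by simp
    have e2': "Gr * (S2 * S2) = 1\<^sub>m ?n" using mat_mult_left_right_inverse[OF c22 Grc e2] .
    have "S1 * S1 = S1 * S1 * (Gr * (S2 * S2))" unfolding e2' by (rule right_mult_one_mat[OF c11, symmetric])
    also have "\<dots> = (S1 * S1 * Gr) * (S2 * S2)" using c11 Grc c22 by (simp add: assoc_mult_mat)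
    also have "\<dots> = S2 * S2" unfolding e1 by (rule left_mult_one_mat[OF c22])
    finally show ?thesis by (rule spd_sqrt_unique[OF s1 s2])
  qed
  have ex1: "\<exists>!S. is_inv_sqrt S Gr" using ex uniq by blast
  define S where "S = mat_inv_sqrt Gr"
  have Sis: "is_inv_sqrt S Gr" unfolding S_def mat_inv_sqrt_def using theI'[OF ex1] .
  have Sspd: "spd_mat ?n S" and SSG: "S * S * Gr = 1\<^sub>m ?n" using Sis unfolding is_inv_sqrt_def dGr by auto
  have Sc: "S \<in> carrier_mat ?n ?n" and ST: "transpose_mat S = S" using Sspd unfolding spd_mat_def by auto
  define Ci where "Ci = S * S"
  have Cic: "Ci \<in> carrier_mat ?n ?n" unfolding Ci_def using Sc by simp
  have CiG: "Ci * Gr = 1\<^sub>m ?n" unfolding Ci_def by (rule SSG)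
  have GCi: "Gr * Ci = 1\<^sub>m ?n" using mat_mult_left_right_inverse[OF Cic Grc CiG] .
  have Pdef: "P = S * \<Gamma>" unfolding P_def S_def Gr_def ..
  have Pc: "P \<in> carrier_mat ?n N" unfolding Pdef using Sc Ga by simp
  have PT: "transpose_mat P = transpose_mat \<Gamma> * S" unfolding Pdef using transpose_mult[OF Sc Ga] ST by simp
  have PTc: "transpose_mat P \<in> carrier_mat N ?n" using Pc by simp
  have PtP0: "transpose_mat P * P = transpose_mat \<Gamma> * S * (S * \<Gamma>)" 
    by (simp only: PT, simp only: Pdef)
  have PtP: "transpose_mat P * P = transpose_mat \<Gamma> * Ci * \<Gamma>"
  proof -
    have SGa: "S * \<Gamma> \<in> carrier_mat ?n N" using Sc Ga by simp
    have "transpose_mat \<Gamma> * S * (S * \<Gamma>) = transpose_mat \<Gamma> * (S * (S * \<Gamma>))"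
      by (rule assoc_mult_mat[OF GaT Sc SGa])
    also have "S * (S * \<Gamma>) = Ci * \<Gamma>" unfolding Ci_def by (rule assoc_mult_mat[OF Sc Sc Ga, symmetric])
    also have "transpose_mat \<Gamma> * (Ci * \<Gamma>) = transpose_mat \<Gamma> * Ci * \<Gamma>"
      by (rule assoc_mult_mat[OF GaT Cic Ga, symmetric])
    finally show ?thesis unfolding PtP0 .
  qed
  define E where "E = transpose_mat \<Gamma> * Ci * \<Gamma> + G * K * transpose_mat G"
  have Ec: "E \<in> carrier_mat N N" unfolding E_def using GaT Cic Ga G K by simp
  have EGT: "E * transpose_mat \<Gamma> = transpose_mat \<Gamma>"
  proof -
    have a: "transpose_mat \<Gamma> * Ci * \<Gamma> * transpose_mat \<Gamma> = transpose_mat \<Gamma>"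
      unfolding assoc4[OF GaT Cic Ga GaT] using GCi CiG unfolding Gr_def[symmetric] using GaT by simp
    have GTGaT: "transpose_mat G * transpose_mat \<Gamma> = 0\<^sub>m M ?n"
      using transpose_mult[OF Ga G, symmetric] GaG by simp
    have b: "G * K * transpose_mat G * transpose_mat \<Gamma> = 0\<^sub>m N ?n"
      unfolding assoc4[OF G K GT GaT] GTGaT using G K by simp
    have "E * transpose_mat \<Gamma> = transpose_mat \<Gamma> * Ci * \<Gamma> * transpose_mat \<Gamma> + G * K * transpose_mat G * transpose_mat \<Gamma>"
      unfolding E_def by (rule add_mult_distrib_mat[of _ N N], insert GaT Cic Ga G K, auto)
    also have "\<dots> = transpose_mat \<Gamma>" unfolding a b using GaT by simp
    finally show ?thesis .
  qed
  have EG: "E * G = G"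
  proof -
    have a: "transpose_mat \<Gamma> * Ci * \<Gamma> * G = 0\<^sub>m N M"
      unfolding assoc4[OF GaT Cic Ga G] GaG using GaT Cic by simp
    have b: "G * K * transpose_mat G * G = G"
      unfolding assoc4[OF G K GT G] using KGG G by simp
    have "E * G = transpose_mat \<Gamma> * Ci * \<Gamma> * G + G * K * transpose_mat G * G"
      unfolding E_def by (rule add_mult_distrib_mat[of _ N N], insert GaT Cic Ga G K, auto)
    also have "\<dots> = G" unfolding a b using G by simp
    finally show ?thesis .
  qed
  define Z where "Z = four_block_mat (transpose_mat \<Gamma>) G (0\<^sub>m 0 ?n) (0\<^sub>m 0 M)"
  have Zc: "Z \<in> carrier_mat N N" unfolding Z_def using four_block_carrier_mat[OF GaT, of "0\<^sub>m 0 M" 0 M G "0\<^sub>m 0 ?n"] NM by simp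
  have Zmv: "Z *\<^sub>v w = (transpose_mat \<Gamma> *\<^sub>v vec_first w ?n + G *\<^sub>v vec_last w M) @\<^sub>v
      (0\<^sub>m 0 ?n *\<^sub>v vec_first w ?n + 0\<^sub>m 0 M *\<^sub>v vec_last w M)" if w: "w \<in> carrier_vec N" for w
  proof -
    have w': "w \<in> carrier_vec (?n + M)" using w NM by simp
    have "Z *\<^sub>v w = Z *\<^sub>v (vec_first w ?n @\<^sub>v vec_last w M)" using vec_first_last_append[OF w'] by simp
    also have "\<dots> = (transpose_mat \<Gamma> *\<^sub>v vec_first w ?n + G *\<^sub>v vec_last w M) @\<^sub>v
      (0\<^sub>m 0 ?n *\<^sub>v vec_first w ?n + 0\<^sub>m 0 M *\<^sub>v vec_last w M)"
      unfolding Z_def by (rule four_block_mat_mult_vec[OF GaT G], auto)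
    finally show ?thesis .
  qed
  have Zfirst: "(Z *\<^sub>v w) $ i = (transpose_mat \<Gamma> *\<^sub>v vec_first w ?n + G *\<^sub>v vec_last w M) $ i"
    if w: "w \<in> carrier_vec N" and i: "i < N" for w i
    unfolding Zmv[OF w] using i GaT G by simp
  have "\<exists>Zi. Zi \<in> carrier_mat N N \<and> Z * Zi = 1\<^sub>m N \<and> Zi * Z = 1\<^sub>m N"
  proof (rule triv_kernel_inv[OF Zc])
    fix w :: "real vec" assume w: "w \<in> carrier_vec N" and z: "Z *\<^sub>v w = 0\<^sub>v N"
    define w1 where "w1 = vec_first w ?n"
    define w2 where "w2 = vec_last w M"
    have w1: "w1 \<in> carrier_vec ?n" and w2: "w2 \<in> carrier_vec M" unfolding w1_def w2_def by auto
    have s0: "transpose_mat \<Gamma> *\<^sub>v w1 + G *\<^sub>v w2 = 0\<^sub>v N"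
    proof (rule eq_vecI)
      fix i assume "i < dim_vec (0\<^sub>v N :: real vec)"
      hence i: "i < N" by simp
      show "(transpose_mat \<Gamma> *\<^sub>v w1 + G *\<^sub>v w2) $ i = 0\<^sub>v N $ i"
        using Zfirst[OF w i] z i unfolding w1_def w2_def by simp
    qed (insert GaT G, auto)
    have "\<Gamma> *\<^sub>v (transpose_mat \<Gamma> *\<^sub>v w1 + G *\<^sub>v w2) = Gr *\<^sub>v w1 + (\<Gamma> * G) *\<^sub>v w2"
      unfolding Gr_def using Ga GaT G w1 w2
      by (simp add: mult_add_distrib_mat_vec[of _ ?n N] assoc_mult_mat_vec[of _ ?n N _ ?n] assoc_mult_mat_vec[of _ ?n N _ M])
    hence "Gr *\<^sub>v w1 = 0\<^sub>v ?n" unfolding s0 GaG using Ga Grc w1 w2 zero_mv[OF w2, of ?n] by simp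
    hence "Ci *\<^sub>v (Gr *\<^sub>v w1) = 0\<^sub>v ?n" using Cic by simp
    hence w10: "w1 = 0\<^sub>v ?n" using assoc_mult_mat_vec[OF Cic Grc w1] CiG w1 by simp
    hence "G *\<^sub>v w2 = 0\<^sub>v N" using s0 GaT G w2 by simp
    hence w20: "w2 = 0\<^sub>v M" using Ginj[OF w2] by simp
    have "w = w1 @\<^sub>v w2" unfolding w1_def w2_def using vec_first_last_append[of w ?n M] w NM by simp
    also have "\<dots> = 0\<^sub>v N" unfolding w10 w20 using NM by (intro eq_vecI, auto)
    finally show "w = 0\<^sub>v N" .
  qed
  then obtain Zi where Zi: "Zi \<in> carrier_mat N N" and ZZi: "Z * Zi = 1\<^sub>m N" by blast
  have Efix: "E *\<^sub>v w = w" if w: "w \<in> carrier_vec N" for w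
  proof -
    define u where "u = Zi *\<^sub>v w"
    have u: "u \<in> carrier_vec N" unfolding u_def using Zi w by simp
    define u1 where "u1 = vec_first u ?n"
    define u2 where "u2 = vec_last u M"
    have u1: "u1 \<in> carrier_vec ?n" and u2: "u2 \<in> carrier_vec M" unfolding u1_def u2_def by auto
    have wZ: "w = Z *\<^sub>v u" unfolding u_def using assoc_mult_mat_vec[OF Zc Zi w] ZZi w by simp
    have ws: "w = transpose_mat \<Gamma> *\<^sub>v u1 + G *\<^sub>v u2"
    proof (rule eq_vecI)
      fix i assume "i < dim_vec (transpose_mat \<Gamma> *\<^sub>v u1 + G *\<^sub>v u2)"
      hence i: "i < N" using GaT G by simp
      show "w $ i = (transpose_mat \<Gamma> *\<^sub>v u1 + G *\<^sub>v u2) $ i"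
        using Zfirst[OF u i] wZ unfolding u1_def u2_def by simp
    qed (insert w GaT G, auto)
    have "E *\<^sub>v w = E *\<^sub>v (transpose_mat \<Gamma> *\<^sub>v u1) + E *\<^sub>v (G *\<^sub>v u2)"
      unfolding ws using Ec GaT G u1 u2 by (simp add: mult_add_distrib_mat_vec[of _ N N])
    also have "\<dots> = (E * transpose_mat \<Gamma>) *\<^sub>v u1 + (E * G) *\<^sub>v u2"
      using assoc_mult_mat_vec[OF Ec GaT u1] assoc_mult_mat_vec[OF Ec G u2] by simp
    also have "\<dots> = w" unfolding EGT EG ws ..
    finally show ?thesis .
  qed
  have E1: "E = 1\<^sub>m N" by (rule fix_one[OF Ec Efix])
  have dGr: "dim_row G = N" using G by simp
  have Qdef: "proj_perp G = 1\<^sub>m N - G * K * transpose_mat G" unfolding proj_perp_def Kinv dGr ..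
  have PtPQ: "transpose_mat P * P = proj_perp G"
    unfolding PtP Qdef
  proof (rule eq_matI)
    fix i j assume "i < dim_row (1\<^sub>m N - G * K * transpose_mat G)" "j < dim_col (1\<^sub>m N - G * K * transpose_mat G)"
    hence i: "i < N" and j: "j < N" using G by auto
    have "E $$ (i,j) = (transpose_mat \<Gamma> * Ci * \<Gamma>) $$ (i,j) + (G * K * transpose_mat G) $$ (i,j)"
      unfolding E_def using i j GaT Cic Ga G K by simp
    moreover have "(1\<^sub>m N - G * K * transpose_mat G) $$ (i,j) = 1\<^sub>m N $$ (i,j) - (G * K * transpose_mat G) $$ (i,j)"
      using i j G K by simp
    ultimately show "(transpose_mat \<Gamma> * Ci * \<Gamma>) $$ (i,j) = (1\<^sub>m N - G * K * transpose_mat G) $$ (i,j)"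
      unfolding E1 by simp
  qed (insert GaT Ga Cic G, auto)
  define Q where "Q = proj_perp G"
  have Qc: "Q \<in> carrier_mat N N" unfolding Q_def PtPQ[symmetric] using PTc Pc by simp
  have PtPQ': "transpose_mat P * P = Q" unfolding Q_def by (rule PtPQ)
  have X12: "transpose_mat H * transpose_mat P * P * H = transpose_mat H * Q * H"
    unfolding assoc_mult_mat[OF HT PTc Pc] PtPQ' ..
  define X where "X = transpose_mat H * Q * H"
  have Xc: "X \<in> carrier_mat L L" unfolding X_def using HT Qc H by simp
  have "\<exists>Xi. Xi \<in> carrier_mat L L \<and> X * Xi = 1\<^sub>m L \<and> Xi * X = 1\<^sub>m L"
  proof (rule triv_kernel_inv[OF Xc])
    fix x :: "real vec" assume x: "x \<in> carrier_vec L" and z: "X *\<^sub>v x = 0\<^sub>v L"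
    define y where "y = H *\<^sub>v x"
    have y: "y \<in> carrier_vec N" unfolding y_def using H x by simp
    have Py: "P *\<^sub>v y \<in> carrier_vec ?n" using Pc y by simp
    define zv where "zv = P\<^sup>T *\<^sub>v (P *\<^sub>v y)"
    have zv: "zv \<in> carrier_vec N" unfolding zv_def using PTc Py by simp
    have Qy: "Q *\<^sub>v y = zv" unfolding zv_def PtPQ'[symmetric] using assoc_mult_mat_vec[OF PTc Pc y] .
    have Xx: "X *\<^sub>v x = transpose_mat H *\<^sub>v zv"
    proof -
      have HTQ: "transpose_mat H * Q \<in> carrier_mat L N" using HT Qc by simp
      have "X *\<^sub>v x = (transpose_mat H * Q) *\<^sub>v y" unfolding X_def y_def by (rule assoc_mult_mat_vec[OF HTQ H x])
      also have "\<dots> = transpose_mat H *\<^sub>v (Q *\<^sub>v y)" by (rule assoc_mult_mat_vec[OF HT Qc y])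
      finally show ?thesis unfolding Qy .
    qed
    have "0 = x \<bullet> (X *\<^sub>v x)" unfolding z using x by simp
    also have "\<dots> = (transpose_mat H *\<^sub>v zv) \<bullet> x" unfolding Xx
      by (rule comm_scalar_prod[of _ L], insert x HT zv, auto)
    also have "\<dots> = zv \<bullet> y" unfolding y_def by (rule transpose_vec_mult_scalar[OF H x zv])
    also have "\<dots> = (P *\<^sub>v y) \<bullet> (P *\<^sub>v y)" unfolding zv_def by (rule transpose_vec_mult_scalar[OF Pc y Py])
    finally have "(P *\<^sub>v y) \<bullet> (P *\<^sub>v y) = 0" by simp
    hence Py0: "P *\<^sub>v y = 0\<^sub>v ?n" using real_self_pos[OF Py] by force
    hence Qy0: "Q *\<^sub>v y = 0\<^sub>v N" unfolding Qy zv_def using PTc by simp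
    define zz where "zz = K *\<^sub>v (transpose_mat G *\<^sub>v y)"
    have zz: "zz \<in> carrier_vec M" unfolding zz_def using K GT y by simp
    have GKG: "(G * K * transpose_mat G) *\<^sub>v y = G *\<^sub>v zz"
    proof -
      have GK: "G * K \<in> carrier_mat N M" using G K by simp
      have "(G * K * transpose_mat G) *\<^sub>v y = (G * K) *\<^sub>v (transpose_mat G *\<^sub>v y)"
        by (rule assoc_mult_mat_vec[OF GK GT y])
      also have "\<dots> = G *\<^sub>v zz" unfolding zz_def using GT y by (intro assoc_mult_mat_vec[OF G K], simp)
      finally show ?thesis .
    qed
    have GKGc: "G * K * transpose_mat G \<in> carrier_mat N N" using G K by simp
    have "Q *\<^sub>v y = y - G *\<^sub>v zz" unfolding Q_def Qdef
      using minus_mult_distrib_mat_vec[OF one_carrier_mat GKGc y] y GKG by simp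
    hence yG: "y = G *\<^sub>v zz"
    proof -
      assume eq: "Q *\<^sub>v y = y - G *\<^sub>v zz"
      show ?thesis
      proof (rule eq_vecI)
        fix i assume "i < dim_vec (G *\<^sub>v zz)"
        hence i: "i < N" using G by simp
        have "(y - G *\<^sub>v zz) $ i = 0" using Qy0 eq i by (metis index_zero_vec(1))
        thus "y $ i = (G *\<^sub>v zz) $ i" using i y G by simp
      qed (insert y G, auto)
    qed
    have d: "(-1) \<cdot>\<^sub>v zz \<in> carrier_vec M" using zz by simp
    have "H *\<^sub>v x + G *\<^sub>v ((-1) \<cdot>\<^sub>v zz) = 0\<^sub>v N"
    proof (rule eq_vecI)
      fix i assume "i < dim_vec (0\<^sub>v N :: real vec)"
      hence i: "i < N" by simp
      have "G *\<^sub>v ((-1) \<cdot>\<^sub>v zz) = (-1) \<cdot>\<^sub>v (G *\<^sub>v zz)" by (rule mult_mat_vec[OF G zz])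
      thus "(H *\<^sub>v x + G *\<^sub>v ((-1) \<cdot>\<^sub>v zz)) $ i = 0\<^sub>v N $ i"
        using i H G x zz yG[symmetric] unfolding y_def by simp
    qed (insert H G, auto)
    from HG_inj[OF H G rk x d this] show "x = 0\<^sub>v L" by simp
  qed
  then obtain Xi where Xi: "Xi \<in> carrier_mat L L" and XXi: "X * Xi = 1\<^sub>m L" and XiX: "Xi * X = 1\<^sub>m L" by blast
  have invX: "invertible_mat X" by (rule inv_invertible[OF Xc Xi XXi XiX])
  have mX: "mat_inv X = Xi" by (rule mat_inv_eq[OF Xc Xi XXi XiX])
  have final: "mat_inv (transpose_mat H * transpose_mat P * P * H) * transpose_mat H * transpose_mat P * P *\<^sub>v y
         = mat_inv (transpose_mat H * proj_perp G * H) * transpose_mat H * proj_perp G *\<^sub>v y" for y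
  proof -
    have XiHT: "Xi * transpose_mat H \<in> carrier_mat L N" using Xi HT by simp
    have "mat_inv (transpose_mat H * transpose_mat P * P * H) * transpose_mat H * transpose_mat P * P
       = Xi * transpose_mat H * (transpose_mat P * P)"
      unfolding X12 X_def[symmetric] mX by (rule assoc_mult_mat[OF XiHT PTc Pc])
    also have "\<dots> = mat_inv (transpose_mat H * proj_perp G * H) * transpose_mat H * proj_perp G"
      unfolding PtPQ Q_def[symmetric] X_def[symmetric] mX ..
    finally show ?thesis by simp
  qed
  have X1inv: "invertible_mat (transpose_mat H * transpose_mat P * P * H)" unfolding X12 X_def[symmetric] by (rule invX)
  have X2inv: "invertible_mat (transpose_mat H * proj_perp G * H)" using invX unfolding X_def Q_def .
  have ex1': "\<exists>!S. is_inv_sqrt S (\<Gamma> * transpose_mat \<Gamma>)" using ex1 unfolding Gr_def .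
  show ?thesis
  proof (intro conjI ballI)
    fix y :: "real vec" assume "y \<in> carrier_vec N"
    show "mat_inv (transpose_mat H * transpose_mat P * P * H) * transpose_mat H * transpose_mat P * P *\<^sub>v y
         = mat_inv (transpose_mat H * proj_perp G * H) * transpose_mat H * proj_perp G *\<^sub>v y" by (rule final)
  qed (rule Ga, rule rank, rule GaG, rule ex1', rule X1inv, rule invGG, rule X2inv)
qed



end
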